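(* For every list (any length, any initial order) and every request sequence $\sigma$, in the full cost model, $$\min\{\mathrm{TS}(\sigma),\mathrm{MTFO}(\sigma),\mathrm{MTFE}(\sigma)\}\le \tfrac{5}{3}\,\mathrm{OPT}(\sigma).$$ Consequently, a deterministic online algorithm that receives two advice bits indicating which of TS, MTFO, MTFE has the smallest cost on $\sigma$ and then runs it has cost at most $\frac53\mathrm{OPT}(\sigma)$ on every $\sigma$.
   Context: Static list update problem: a list of $l$ distinct items in some initial order; a request sequence $\sigma$ is served in order. Serving a request to the item at position $i$ (positions $1,\dots,l$ from the front) costs $i$ (full cost model). Immediately after an access, the accessed item may be moved closer to the front at no cost (free exchange); at any time two adjacent items may be swapped at cost $1$ (paid exchange). $A(\sigma)$ is the total cost of algorithm $A$ on $\sigma$; $\mathrm{OPT}(\sigma)$ is the minimum cost of any offline algorithm on $\sigma$; all algorithms start from the same initial list. MTFO (Move-To-Front-Odd) moves a requested item to the front (by a free exchange) on the 1st, 3rd, 5th, ... request to that item, and otherwise leaves it in place. MTFE (Move-To-Front-Even) moves a requested item to the front on the 2nd, 4th, 6th, ... request to that item, and otherwise leaves it in place. TS (Timestamp): on a request to item $x$, if $x$ has been requested before and some item preceding $x$ in the list has been requested at most once since the previous request to $x$, then $x$ is moved (free exchange) to immediately in front of the frontmost such item; otherwise no item is moved. None of these algorithms makes paid exchanges. *)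

theory Defs
  imports Complex_Main
begin

text \<open>Static list update, full cost model. Lists are 0-indexed internally;
  the item at 0-based index i has position i+1 and access cost i+1.\<close>

definition idx :: "'a list \<Rightarrow> 'a \<Rightarrow> nat" where
  "idx xs x = length (takeWhile (\<lambda>y. y \<noteq> x) xs)"

text \<open>Free exchange: move x (forward) so that it ends at 0-based index k;
  if k is not in front of x's current index nothing happens.\<close>
definition mv_to :: "nat \<Rightarrow> 'a \<Rightarrow> 'a list \<Rightarrow> 'a list" where
  "mv_to k x s = (if k \<le> idx s x
     then (let r = remove1 x s in take k r @ x # drop k r) else s)"

definition swap_adj :: "nat \<Rightarrow> 'a list \<Rightarrow> 'a list" where
  "swap_adj i xs = (if Suc i < length xs then xs[i := xs ! Suc i, Suc i := xs ! i] else xs)"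

text \<open>Online algorithm without paid exchanges, given by a rule that, from the
  history of past requests, the current list and the requested item, chooses the
  target index of the free exchange.\<close>
fun run_online :: "('a list \<Rightarrow> 'a list \<Rightarrow> 'a \<Rightarrow> nat) \<Rightarrow> 'a list \<Rightarrow> 'a list \<Rightarrow> 'a list \<Rightarrow> nat" where
  "run_online rule h s [] = 0"
| "run_online rule h s (x # \<sigma>) =
     Suc (idx s x) + run_online rule (h @ [x]) (mv_to (rule h s x) x s) \<sigma>"

definition mtfo_rule :: "'a list \<Rightarrow> 'a list \<Rightarrow> 'a \<Rightarrow> nat" where
  "mtfo_rule h s x = (if even (count_list h x) then 0 else idx s x)"

definition mtfe_rule :: "'a list \<Rightarrow> 'a list \<Rightarrow> 'a \<Rightarrow> nat" where
  "mtfe_rule h s x = (if odd (count_list h x) then 0 else idx s x)"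

text \<open>TS: if x was requested before, let seg be the requests since the previous
  request to x; move x immediately in front of the frontmost item preceding x
  that occurs at most once in seg (if any).\<close>
definition ts_rule :: "'a list \<Rightarrow> 'a list \<Rightarrow> 'a \<Rightarrow> nat" where
  "ts_rule h s x = (if x \<in> set h then
     (let j = length h - 1 - idx (rev h) x;
          seg = drop (Suc j) h;
          cands = filter (\<lambda>i. count_list seg (s ! i) \<le> 1) [0..<idx s x]
      in if cands = [] then idx s x else hd cands)
   else idx s x)"

definition TS :: "'a list \<Rightarrow> 'a list \<Rightarrow> nat" where
  "TS init \<sigma> = run_online ts_rule [] init \<sigma>"
definition MTFO :: "'a list \<Rightarrow> 'a list \<Rightarrow> nat" where
  "MTFO init \<sigma> = run_online mtfo_rule [] init \<sigma>"
definition MTFE :: "'a list \<Rightarrow> 'a list \<Rightarrow> nat" where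
  "MTFE init \<sigma> = run_online mtfe_rule [] init \<sigma>"

text \<open>General offline algorithm: before each access an arbitrary sequence of
  paid adjacent exchanges (cost 1 each), then the access (cost = position),
  then a free exchange moving the accessed item forward to index k.\<close>
fun run_offline :: "'a list \<Rightarrow> 'a list \<Rightarrow> (nat list \<times> nat) list \<Rightarrow> nat" where
  "run_offline s (x # \<sigma>) ((sw, k) # as) =
     (let s1 = foldl (\<lambda>t i. swap_adj i t) s sw
      in length sw + Suc (idx s1 x) + run_offline (mv_to k x s1) \<sigma> as)"
| "run_offline s _ _ = 0"

definition OPT :: "'a list \<Rightarrow> 'a list \<Rightarrow> nat" where
  "OPT init \<sigma> = Inf {run_offline init \<sigma> as | as. length as = length \<sigma>}"

end

theory Submission
  imports Defs
begin

type_synonym st = "bool list \<times> bool \<times> bool \<times> bool \<times> bool"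

definition lastn :: "nat \<Rightarrow> 'b list \<Rightarrow> 'b list" where
  "lastn n xs = drop (length xs - n) xs"

fun step :: "st \<Rightarrow> bool \<Rightarrow> st" where
  "step (l, px, py, ob, eb) b =
     (lastn 3 (l @ [b]), if b then \<not> px else px, if b then py else \<not> py,
      if (if b then px else py) then ob else b, if (if b then px else py) then b else eb)"

definition tsb :: "bool list \<Rightarrow> bool" where
  "tsb l = (2 \<le> count_list l True \<or> (count_list l True \<le> 1 \<and> count_list l False \<le> 1))"

definition cst :: "bool \<Rightarrow> bool \<Rightarrow> nat" where
  "cst f b = (if f = b then 0 else 1)"

definition RR :: "st list" where "RR = [([], False, False, True, True),
  ([False, False], False, False, False, False),
  ([False, False, False], False, False, False, False),
  ([False, False, False], False, True, False, False),
  ([False, False, False], True, False, False, False),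
  ([False, False, False], True, True, False, False),
  ([False, False, True], False, False, False, True),
  ([False, False, True], False, True, False, True),
  ([False, False, True], True, False, True, False),
  ([False, False, True], True, True, True, False),
  ([False, True], True, True, True, True),
  ([False, True, False], False, False, False, False),
  ([False, True, False], False, True, False, True),
  ([False, True, False], True, False, True, False),
  ([False, True, False], True, True, False, False),
  ([False, True, True], False, False, True, True),
  ([False, True, True], False, True, True, True),
  ([False, True, True], True, False, True, True),
  ([False, True, True], True, True, True, True),
  ([False], False, True, False, True),
  ([True, False], True, True, False, True),
  ([True, False, False], False, False, False, False),
  ([True, False, False], False, True, False, False),
  ([True, False, False], True, False, False, False),
  ([True, False, False], True, True, False, False),
  ([True, False, True], False, False, True, True),
  ([True, False, True], False, True, False, True),
  ([True, False, True], True, False, True, False),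
  ([True, False, True], True, True, True, True),
  ([True, True], False, False, True, True),
  ([True, True, False], False, False, True, False),
  ([True, True, False], False, True, False, True),
  ([True, True, False], True, False, True, False),
  ([True, True, False], True, True, False, True),
  ([True, True, True], False, False, True, True),
  ([True, True, True], False, True, True, True),
  ([True, True, True], True, False, True, True),
  ([True, True, True], True, True, True, True),
  ([True], True, False, True, True)]"

definition PT :: "((st \<times> bool) \<times> nat) list" where "PT = [((([], False, False, True, True), True), 0),
  ((([], False, False, True, True), False), 5),
  ((([False, False], False, False, False, False), True), 5),
  ((([False, False], False, False, False, False), False), 0),
  ((([False, False, False], False, False, False, False), True), 5),
  ((([False, False, False], False, False, False, False), False), 0),
  ((([False, False, False], False, True, False, False), True), 5),
  ((([False, False, False], False, True, False, False), False), 0),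
  ((([False, False, False], True, False, False, False), True), 5),
  ((([False, False, False], True, False, False, False), False), 0),
  ((([False, False, False], True, True, False, False), True), 5),
  ((([False, False, False], True, True, False, False), False), 0),
  ((([False, False, True], False, False, False, True), True), 2),
  ((([False, False, True], False, False, False, True), False), 2),
  ((([False, False, True], False, True, False, True), True), 2),
  ((([False, False, True], False, True, False, True), False), 2),
  ((([False, False, True], True, False, True, False), True), 2),
  ((([False, False, True], True, False, True, False), False), 2),
  ((([False, False, True], True, True, True, False), True), 2),
  ((([False, False, True], True, True, True, False), False), 2),
  ((([False, True], True, True, True, True), True), 1),
  ((([False, True], True, True, True, True), False), 6),
  ((([False, True, False], False, False, False, False), True), 4),
  ((([False, True, False], False, False, False, False), False), 1),
  ((([False, True, False], False, True, False, True), True), 3),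
  ((([False, True, False], False, True, False, True), False), 1),
  ((([False, True, False], True, False, True, False), True), 3),
  ((([False, True, False], True, False, True, False), False), 1),
  ((([False, True, False], True, True, False, False), True), 4),
  ((([False, True, False], True, True, False, False), False), 1),
  ((([False, True, True], False, False, True, True), True), 0),
  ((([False, True, True], False, False, True, True), False), 5),
  ((([False, True, True], False, True, True, True), True), 0),
  ((([False, True, True], False, True, True, True), False), 5),
  ((([False, True, True], True, False, True, True), True), 0),
  ((([False, True, True], True, False, True, True), False), 5),
  ((([False, True, True], True, True, True, True), True), 0),
  ((([False, True, True], True, True, True, True), False), 5),
  ((([False], False, True, False, True), True), 2),
  ((([False], False, True, False, True), False), 2),
  ((([True, False], True, True, False, True), True), 2),
  ((([True, False], True, True, False, True), False), 2),
  ((([True, False, False], False, False, False, False), True), 5),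
  ((([True, False, False], False, False, False, False), False), 0),
  ((([True, False, False], False, True, False, False), True), 5),
  ((([True, False, False], False, True, False, False), False), 0),
  ((([True, False, False], True, False, False, False), True), 5),
  ((([True, False, False], True, False, False, False), False), 0),
  ((([True, False, False], True, True, False, False), True), 5),
  ((([True, False, False], True, True, False, False), False), 0),
  ((([True, False, True], False, False, True, True), True), 1),
  ((([True, False, True], False, False, True, True), False), 4),
  ((([True, False, True], False, True, False, True), True), 1),
  ((([True, False, True], False, True, False, True), False), 3),
  ((([True, False, True], True, False, True, False), True), 1),
  ((([True, False, True], True, False, True, False), False), 3),
  ((([True, False, True], True, True, True, True), True), 1),
  ((([True, False, True], True, True, True, True), False), 4),
  ((([True, True], False, False, True, True), True), 0),
  ((([True, True], False, False, True, True), False), 5),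
  ((([True, True, False], False, False, True, False), True), 2),
  ((([True, True, False], False, False, True, False), False), 2),
  ((([True, True, False], False, True, False, True), True), 2),
  ((([True, True, False], False, True, False, True), False), 2),
  ((([True, True, False], True, False, True, False), True), 2),
  ((([True, True, False], True, False, True, False), False), 2),
  ((([True, True, False], True, True, False, True), True), 2),
  ((([True, True, False], True, True, False, True), False), 2),
  ((([True, True, True], False, False, True, True), True), 0),
  ((([True, True, True], False, False, True, True), False), 5),
  ((([True, True, True], False, True, True, True), True), 0),
  ((([True, True, True], False, True, True, True), False), 5),
  ((([True, True, True], True, False, True, True), True), 0),
  ((([True, True, True], True, False, True, True), False), 5),
  ((([True, True, True], True, True, True, True), True), 0),
  ((([True, True, True], True, True, True, True), False), 5),
  ((([True], True, False, True, True), True), 0),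
  ((([True], True, False, True, True), False), 5)]"

definition obit :: "st \<Rightarrow> bool" where "obit q = fst (snd (snd (snd q)))"
definition ebit :: "st \<Rightarrow> bool" where "ebit q = snd (snd (snd (snd q)))"

definition Psi :: "st \<Rightarrow> bool \<Rightarrow> nat" where
  "Psi q c = (case map_of PT (q, c) of Some v \<Rightarrow> v | None \<Rightarrow> 0)"

lemma fin_all: "list_all (\<lambda>q. list_all (\<lambda>b. step q b \<in> set RR \<and>
   list_all (\<lambda>c. Psi q (\<not> c) \<le> Psi q c + 5 \<and> list_all (\<lambda>o'. (o' = c \<or> o' = b) \<longrightarrow>
     cst (tsb (fst q)) b + cst (obit q) b + cst (ebit q) b + Psi (step q b) o'
       \<le> Psi q c + 5 * cst c b) [True, False]) [True, False]) [True, False]) RR"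
  by code_simp



lemma idx_Cons: "idx (a # xs) z = (if a = z then 0 else Suc (idx xs z))"
  by (simp add: idx_def)
lemma idx_less: "z \<in> set s \<Longrightarrow> idx s z < length s"
  by (induction s) (auto simp: idx_Cons)
lemma nth_idx: "z \<in> set s \<Longrightarrow> s ! idx s z = z"
  by (induction s) (auto simp: idx_Cons)
lemma idx_nth: "distinct s \<Longrightarrow> i < length s \<Longrightarrow> idx s (s ! i) = i"
  by (induction s arbitrary: i) (auto simp: idx_Cons nth_Cons split: nat.splits)
lemma idx_append: "idx (xs @ ys) z = (if z \<in> set xs then idx xs z else length xs + idx ys z)"
  by (induction xs) (auto simp: idx_Cons)
lemma idx_inj: "x \<in> set s \<Longrightarrow> y \<in> set s \<Longrightarrow> idx s x = idx s y \<Longrightarrow> x = y"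
  by (metis nth_idx)
lemma in_take_idx: "z \<in> set s \<Longrightarrow> z \<in> set (take k s) \<longleftrightarrow> idx s z < k"
  apply (induction s arbitrary: k)
   apply simp
  subgoal for a s k by (cases k) (auto simp: idx_Cons)
  done
lemma idx_take: "z \<in> set (take k s) \<Longrightarrow> idx (take k s) z = idx s z"
  by (induction s arbitrary: k) (auto simp: idx_Cons take_Cons split: nat.splits if_splits)
lemma idx_drop: "z \<in> set s \<Longrightarrow> k \<le> idx s z \<Longrightarrow> idx (drop k s) z = idx s z - k"
  by (induction s arbitrary: k) (auto simp: idx_Cons drop_Cons split: nat.splits if_splits)
lemma idx_remove1: "z \<in> set L \<Longrightarrow> z \<noteq> a \<Longrightarrow> a \<in> set L \<Longrightarrow>
   idx (remove1 a L) z = (if idx L z < idx L a then idx L z else idx L z - 1)"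
proof (induction L)
  case (Cons c L)
  show ?case
  proof (cases "c = a")
    case True then show ?thesis using Cons by (auto simp: idx_Cons)
  next
    case False
    then have "a \<in> set L" using Cons by auto
    moreover have "c \<noteq> z \<Longrightarrow> z \<in> set L" using Cons by auto
    moreover have "c \<noteq> z \<Longrightarrow> idx L z \<noteq> idx L a" using Cons calculation idx_inj by metis
    ultimately show ?thesis using Cons False by (auto simp: idx_Cons)
  qed
qed simp

lemma mv_to_eq: assumes "k \<le> idx s a" "a \<in> set s"
  shows "mv_to k a s = take k s @ a # remove1 a (drop k s)"
proof -
  have lt: "k < length s" using assms idx_less[of a s] by simp
  have na: "a \<notin> set (take k s)" using assms in_take_idx[of a s k] by simp
  have r: "remove1 a s = take k s @ remove1 a (drop k s)"
    using remove1_append[of a "take k s" "drop k s"] na by simp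
  show ?thesis using assms lt by (simp add: mv_to_def r Let_def)
qed

lemma mv_to_perm: assumes "distinct s" "a \<in> set s"
  shows "distinct (mv_to k a s) \<and> set (mv_to k a s) = set s"
proof (cases "k \<le> idx s a")
  case True
  have lt: "k < length s" using True assms idx_less[of a s] by simp
  have na: "a \<notin> set (take k s)" using True assms in_take_idx[of a s k] by simp
  have ad: "a \<in> set (drop k s)" using na assms
    by (metis Un_iff append_take_drop_id set_append)
  have "set (take k s) \<inter> set (drop k s) = {}" using assms(1)
    by (simp add: set_take_disj_set_drop_if_distinct)
  moreover have "set s = set (take k s) \<union> set (drop k s)"
    by (metis append_take_drop_id set_append)
  ultimately show ?thesis using True assms na ad
    by (auto simp: mv_to_eq)
qed (simp add: mv_to_def assms)

lemma idx_mv_to: assumes "distinct s" "a \<in> set s" "k \<le> idx s a" "z \<in> set s"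
  shows "idx (mv_to k a s) z = (if z = a then k else if idx s z < k then idx s z
     else if idx s z < idx s a then Suc (idx s z) else idx s z)"
proof -
  have lt: "k < length s" using assms idx_less[of a s] by simp
  have na: "a \<notin> set (take k s)" using assms in_take_idx[of a s k] by simp
  have lk: "length (take k s) = k" using lt by simp
  show ?thesis
  proof (cases "z \<in> set (take k s)")
    case True
    then have "idx s z < k" "z \<noteq> a" using in_take_idx[of z s k] assms na by auto
    then show ?thesis using True by (simp add: assms mv_to_eq idx_append idx_take)
  next
    case False
    then have zk: "k \<le> idx s z" using in_take_idx[of z s k] assms by auto
    have zd: "z \<in> set (drop k s)" using False assms(4)
      by (metis Un_iff append_take_drop_id set_append)
    have ad: "a \<in> set (drop k s)" using na assms
      by (metis Un_iff append_take_drop_id set_append)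
    show ?thesis
    proof (cases "z = a")
      case True then show ?thesis using False lt by (simp add: assms mv_to_eq idx_append idx_Cons)
    next
      case za: False
      have ne: "idx s z \<noteq> idx s a" using za idx_inj assms by metis
      have "idx (remove1 a (drop k s)) z = (if idx s z < idx s a then idx s z - k else idx s z - k - 1)"
        using idx_remove1[OF zd za ad] idx_drop[OF assms(4) zk] idx_drop[OF assms(2) assms(3)]
        by auto
      moreover have "k \<le> idx s a" by (rule assms(3))
      ultimately show ?thesis using False za zk ne lt
        by (simp add: mv_to_eq[OF assms(3) assms(2)] idx_append lk idx_Cons)
    qed
  qed
qed

lemma mv_pair: assumes "distinct s" "a \<in> set s" "k \<le> idx s a" "x \<in> set s" "y \<in> set s" "x \<noteq> y"
  shows "idx (mv_to k a s) x < idx (mv_to k a s) y \<longleftrightarrow>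
    (if a = x then idx s x < idx s y \<or> k \<le> idx s y
     else if a = y then idx s x < idx s y \<and> \<not> k \<le> idx s x else idx s x < idx s y)"
proof -
  have ne: "idx s x \<noteq> idx s y" using assms idx_inj by metis
  have nx: "x \<noteq> a \<Longrightarrow> idx s x \<noteq> idx s a" using assms idx_inj by metis
  have ny: "y \<noteq> a \<Longrightarrow> idx s y \<noteq> idx s a" using assms idx_inj by metis
  show ?thesis using ne nx ny assms(3)
    by (simp add: idx_mv_to[OF assms(1-3)] assms(4,5)) (auto simp: assms(6)[symmetric])
qed

lemma swap_perm: "distinct s \<Longrightarrow> distinct (swap_adj i s) \<and> set (swap_adj i s) = set s"
  by (simp add: swap_adj_def)

lemma idx_swap: assumes "distinct s" "Suc i < length s" "z \<in> set s"
  shows "idx (swap_adj i s) z = (if z = s ! i then Suc i else if z = s ! Suc i then i else idx s z)"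
proof -
  let ?t = "s[i := s ! Suc i, Suc i := s ! i]"
  have d: "distinct ?t" using assms by simp
  have lt: "length ?t = length s" by simp
  have ne: "s ! i \<noteq> s ! Suc i" using assms by (simp add: nth_eq_iff_index_eq)
  show ?thesis
  proof -
    have "z = s ! i \<Longrightarrow> idx ?t z = Suc i"
      using idx_nth[OF d, of "Suc i"] assms by simp
    moreover have "z = s ! Suc i \<Longrightarrow> idx ?t z = i"
      using idx_nth[OF d, of i] assms ne by simp
    moreover have "z \<noteq> s ! i \<Longrightarrow> z \<noteq> s ! Suc i \<Longrightarrow> idx ?t z = idx s z"
    proof -
      assume a1: "z \<noteq> s ! i" "z \<noteq> s ! Suc i"
      let ?j = "idx s z"
      have j: "?j < length s" "s ! ?j = z" using assms idx_less nth_idx by metis+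
      have "?j \<noteq> i" "?j \<noteq> Suc i" using j a1 by auto
      then have "?t ! ?j = z" using j by simp
      then show ?thesis using idx_nth[OF d, of ?j] j by simp
    qed
    ultimately show ?thesis using assms by (simp add: swap_adj_def)
  qed
qed

lemma card_before: assumes "distinct s" "a \<in> set s"
  shows "card {y \<in> set s. idx s y < idx s a} = idx s a"
proof -
  have "{y \<in> set s. idx s y < idx s a} = set (take (idx s a) s)"
    using in_take_idx[of _ s] by (auto dest: in_set_takeD)
  moreover have "length (take (idx s a) s) = idx s a" using idx_less[OF assms(2)] by simp
  ultimately show ?thesis using assms(1) by (simp add: distinct_card)
qed




lemma fin_facts: assumes "q \<in> set RR"
  shows "step q b \<in> set RR" "Psi q (\<not> c) \<le> Psi q c + 5"
    "o' = c \<or> o' = b \<Longrightarrow> cst (tsb (fst q)) b + cst (obit q) b + cst (ebit q) b + Psi (step q b) o'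
       \<le> Psi q c + 5 * cst c b"
  using fin_all assms unfolding list_all_iff by (cases b; cases c; cases o'; auto)+

lemma lastn_append: "lastn n (X @ Y) = lastn (n - length Y) X @ lastn n Y"
  by (cases "n \<le> length Y") (auto simp: lastn_def drop_append)
lemma lastn_lastn: "n \<le> m \<Longrightarrow> lastn n (lastn m L) = lastn n L"
  by (simp add: lastn_def) (rule arg_cong[where f="\<lambda>k. drop k L"], arith)
lemma length_lastn: "length (lastn n L) = min n (length L)"
  by (auto simp: lastn_def)
lemma set_lastn: "set (lastn n L) \<subseteq> set L"
  by (auto simp: lastn_def dest: in_set_dropD)
lemma lastn_snoc3: "lastn 3 (L @ [c]) = lastn 2 L @ [c]"
  by (simp add: lastn_append lastn_def)
lemma lastn_map: "lastn n (map f L) = map f (lastn n L)"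
  by (simp add: lastn_def drop_map)

definition proj :: "'a list \<Rightarrow> 'a \<Rightarrow> 'a \<Rightarrow> 'a list" where
  "proj h u v = filter (\<lambda>z. z \<in> {u, v}) h"

lemma proj_sym: "proj h v u = proj h u v"
  by (simp add: proj_def insert_commute)
lemma set_proj: "set (proj h u v) \<subseteq> {u, v}"
  by (auto simp: proj_def)

definition Cm :: "'a list \<Rightarrow> 'a list \<Rightarrow> 'a \<Rightarrow> 'a \<Rightarrow> bool" where
  "Cm init L u v = (2 \<le> count_list L u \<or> (count_list L u \<le> 1 \<and> count_list L v \<le> 1 \<and> idx init u < idx init v))"
definition C :: "'a list \<Rightarrow> 'a list \<Rightarrow> 'a \<Rightarrow> 'a \<Rightarrow> bool" where
  "C init h u v = Cm init (lastn 3 (proj h u v)) u v"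

lemma list3_induct:
  assumes "length M \<le> 3" "set M \<subseteq> {u, v}" "P []" "\<And>c1. c1 \<in> {u, v} \<Longrightarrow> P [c1]"
    "\<And>c1 c2. c1 \<in> {u, v} \<Longrightarrow> c2 \<in> {u, v} \<Longrightarrow> P [c1, c2]"
    "\<And>c1 c2 c3. c1 \<in> {u, v} \<Longrightarrow> c2 \<in> {u, v} \<Longrightarrow> c3 \<in> {u, v} \<Longrightarrow> P [c1, c2, c3]"
  shows "P M"
proof (cases M)
  case Nil then show ?thesis using assms by simp
next
  case (Cons c1 M1)
  show ?thesis
  proof (cases M1)
    case Nil then show ?thesis using assms Cons by simp
  next
    case (Cons c2 M2)
    show ?thesis
    proof (cases M2)
      case Nil then show ?thesis using assms Cons \<open>M = c1 # M1\<close> by simp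
    next
      case (Cons c3 M3)
      then have "M3 = []" using assms(1) \<open>M1 = c2 # M2\<close> \<open>M = c1 # M1\<close> by simp
      then show ?thesis using assms Cons \<open>M1 = c2 # M2\<close> \<open>M = c1 # M1\<close> by simp
    qed
  qed
qed

lemma M_props: "length (lastn 3 (proj h u v)) \<le> 3 \<and> set (lastn 3 (proj h u v)) \<subseteq> {u, v}"
  using set_lastn set_proj length_lastn by (metis min.cobounded1 subset_trans)

lemma C_sym: assumes "u \<noteq> v" "idx init u \<noteq> idx init v"
  shows "C init h v u \<longleftrightarrow> \<not> C init h u v"
proof -
  define M where "M = lastn 3 (proj h u v)"
  have "length M \<le> 3" "set M \<subseteq> {u, v}" using M_props[of h u v] M_def by auto
  then have "Cm init M v u \<longleftrightarrow> \<not> Cm init M u v"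
    by (rule list3_induct) (use assms in \<open>auto simp: Cm_def\<close>)
  then show ?thesis by (simp add: C_def proj_sym[of h v u] M_def)
qed

lemma C_other: "a \<noteq> u \<Longrightarrow> a \<noteq> v \<Longrightarrow> C init (h @ [a]) u v = C init h u v"
  by (simp add: C_def proj_def)

lemma C_snoc: assumes "a \<noteq> y"
  shows "C init (h @ [a]) a y \<longleftrightarrow> C init h a y \<or> a \<in> set (lastn 2 (proj h a y))"
proof -
  define M where "M = lastn 3 (proj h a y)"
  have l2: "lastn 2 (proj h a y) = lastn 2 M" using M_def lastn_lastn[of 2 3 "proj h a y"] by simp
  have l3: "lastn 3 (proj (h @ [a]) a y) = lastn 2 M @ [a]"
  proof -
    have "proj (h @ [a]) a y = proj h a y @ [a]" by (simp add: proj_def)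
    then show ?thesis using l2 by (simp add: lastn_snoc3)
  qed
  have "length M \<le> 3" "set M \<subseteq> {a, y}" using M_props[of h a y] M_def by auto
  then have "Cm init (lastn 2 M @ [a]) a y \<longleftrightarrow> Cm init M a y \<or> a \<in> set (lastn 2 M)"
    by (rule list3_induct) (use assms in \<open>auto simp: Cm_def lastn_def\<close>)
  then show ?thesis by (simp add: C_def l3 l2 M_def)
qed

lemma seg_decomp: assumes "a \<in> set h"
  shows "h = take (length h - 1 - idx (rev h) a) h @ a # drop (Suc (length h - 1 - idx (rev h) a)) h \<and>
         a \<notin> set (drop (Suc (length h - 1 - idx (rev h) a)) h)"
proof -
  define k where "k = idx (rev h) a"
  define j where "j = length h - 1 - k"
  have ar: "a \<in> set (rev h)" using assms by simp
  have kl: "k < length h" using idx_less[OF ar] k_def by simp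
  have "rev h ! k = a" using nth_idx[OF ar] k_def by simp
  then have hj: "h ! j = a" using kl by (simp add: rev_nth j_def)
  have jl: "j < length h" using kl j_def by simp
  have d: "h = take j h @ h ! j # drop (Suc j) h" using jl by (simp add: id_take_nth_drop)
  have "rev (take k (rev h)) = drop (length h - k) h" by (simp add: rev_take)
  moreover have "Suc j = length h - k" using kl j_def by simp
  moreover have "a \<notin> set (take k (rev h))" using in_take_idx[OF ar, of k] k_def by simp
  ultimately have "drop (Suc j) h = rev (take k (rev h))" "a \<notin> set (take k (rev h))" by simp_all
  then have "a \<notin> set (drop (Suc j) h)" by simp
  then show ?thesis using d hj by (simp add: j_def k_def)
qed

lemma filter_notin: "a \<notin> set seg \<Longrightarrow> filter (\<lambda>z. z \<in> {a, y}) seg = replicate (count_list seg y) y"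
  by (induction seg) auto



lemma X1: "\<not> (c::nat) \<le> 1 \<Longrightarrow> \<exists>d. c = Suc (Suc d)"
  by presburger

lemma seg_count: assumes "h = pre @ a # seg" "a \<notin> set seg" "y \<noteq> a"
  shows "count_list seg y \<le> 1 \<longleftrightarrow> a \<in> set (lastn 2 (proj h a y))"
proof -
  define c where "c = count_list seg y"
  have p: "proj h a y = proj pre a y @ a # replicate c y"
    using assms filter_notin[OF assms(2), of y] by (simp add: proj_def c_def)
  have l: "lastn 2 (proj h a y) = lastn (2 - Suc c) (proj pre a y) @ lastn 2 (a # replicate c y)"
    unfolding p lastn_append by simp
  show ?thesis
  proof (cases "c \<le> 1")
    case True
    then have "lastn 2 (a # replicate c y) = a # replicate c y" by (simp add: lastn_def)
    then show ?thesis using True l c_def by simp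
  next
    case False
    then obtain d where d: "c = Suc (Suc d)"
      by (metis X1)
    have "lastn 2 (a # replicate c y) = replicate 2 y" unfolding d lastn_def
      by (simp del: replicate_Suc add: drop_replicate)
    moreover have "2 - Suc c = 0" using d by simp
    ultimately have "lastn 2 (proj h a y) = replicate 2 y" using l by (simp add: lastn_def)
    then have "a \<notin> set (lastn 2 (proj h a y))" using assms(3) by simp
    then show ?thesis using False c_def by simp
  qed
qed

lemma count_sum: "set L \<subseteq> {u, v} \<Longrightarrow> u \<noteq> v \<Longrightarrow> count_list L u + count_list L v = length L"
  by (induction L) auto

lemma count_lastn_le: "count_list (lastn n L) x \<le> count_list L x"
proof -
  have "count_list L x = count_list (take (length L - n) L @ lastn n L) x"
    by (simp add: lastn_def)
  then have "count_list L x = count_list (take (length L - n) L) x + count_list (lastn n L) x"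
    by simp
  then show ?thesis by simp
qed

lemma three_y: assumes "set Q \<subseteq> {z, y}" "z \<noteq> y" "2 \<le> count_list Q y" "count_list Q z \<le> 1"
  shows "2 \<le> count_list (lastn 3 (P @ Q)) y"
proof -
  have e: "lastn 3 (P @ Q) = lastn (3 - length Q) P @ lastn 3 Q" by (rule lastn_append)
  have le: "count_list (lastn 3 Q) y \<le> count_list (lastn 3 (P @ Q)) y"
    unfolding e count_list_append by (rule le_add2)
  have "2 \<le> count_list (lastn 3 Q) y"
  proof (cases "length Q \<le> 3")
    case True
    then have "lastn 3 Q = Q" by (simp add: lastn_def)
    then show ?thesis using assms(3) by simp
  next
    case False
    have s: "set (lastn 3 Q) \<subseteq> {z, y}" using set_lastn assms(1) by (rule subset_trans)
    have l: "length (lastn 3 Q) = 3" using False length_lastn[of 3 Q] by simp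
    have c: "count_list (lastn 3 Q) z + count_list (lastn 3 Q) y = length (lastn 3 Q)"
      by (rule count_sum[OF s assms(2)])
    have "count_list (lastn 3 Q) z \<le> 1" using count_lastn_le[of 3 Q z] assms(4) by (rule le_trans)
    then show ?thesis using c l by linarith
  qed
  then show ?thesis using le by (rule le_trans)
qed

lemma count_filter: "count_list (filter P xs) x = (if P x then count_list xs x else 0)"
  by (induction xs) auto

lemma hd_filter_upt: "i \<in> set (filter P [m..<n]) \<Longrightarrow> hd (filter P [m..<n]) \<le> i"
proof -
  assume a: "i \<in> set (filter P [m..<n])"
  have s: "sorted (filter P [m..<n])" using sorted_wrt_filter[of "(\<le>)" "[m..<n]" P] by simp
  show ?thesis using a s by (cases "filter P [m..<n]") auto
qed

lemma ts_le: "ts_rule h s a \<le> idx s a"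
proof -
  have "\<And>P. filter P [0..<idx s a] \<noteq> [] \<Longrightarrow> hd (filter P [0..<idx s a]) \<le> idx s a"
  proof -
    fix P assume "filter P [0..<idx s a] \<noteq> []"
    then have "hd (filter P [0..<idx s a]) \<in> set (filter P [0..<idx s a])" by (rule hd_in_set)
    then show "hd (filter P [0..<idx s a]) \<le> idx s a" by simp
  qed
  then show ?thesis by (simp add: ts_rule_def Let_def)
qed

lemma ts_key:
  assumes dist: "distinct s" and aS: "a \<in> set s" and yS: "y \<in> set s" and ya: "y \<noteq> a"
   and yb: "idx s y < idx s a"
   and inv: "\<forall>u\<in>set s. \<forall>v\<in>set s. u \<noteq> v \<longrightarrow> (idx s u < idx s v \<longleftrightarrow> C init h u v)"
  shows "ts_rule h s a \<le> idx s y \<longleftrightarrow> a \<in> set (lastn 2 (proj h a y))"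
proof (cases "a \<in> set h")
  case False
  then have "ts_rule h s a = idx s a" by (simp add: ts_rule_def)
  moreover have "a \<notin> set (lastn 2 (proj h a y))" using False set_lastn by (force simp: proj_def)
  ultimately show ?thesis using yb by simp
next
  case True
  define j where "j = length h - 1 - idx (rev h) a"
  define seg where "seg = drop (Suc j) h"
  have hd2: "h = take j h @ a # seg \<and> a \<notin> set seg"
    unfolding j_def seg_def by (rule seg_decomp[OF True])
  have hdec: "h = take j h @ a # seg" using hd2 by (rule conjunct1)
  have aseg: "a \<notin> set seg" using hd2 by (rule conjunct2)
  define cands where "cands = filter (\<lambda>i. count_list seg (s ! i) \<le> 1) [0..<idx s a]"
  have tr: "ts_rule h s a = (if cands = [] then idx s a else hd cands)"
    using True by (simp add: ts_rule_def j_def seg_def cands_def Let_def)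
  have cnt: "count_list seg y \<le> 1 \<longleftrightarrow> a \<in> set (lastn 2 (proj h a y))"
    using seg_count[OF hdec aseg ya] .
  show ?thesis
  proof
    assume le: "ts_rule h s a \<le> idx s y"
    have ne: "cands \<noteq> []" using le yb tr by (auto split: if_splits)
    define i where "i = hd cands"
    have iin: "i \<in> set cands" using ne i_def by simp
    then have ia: "i < idx s a" and ic: "count_list seg (s ! i) \<le> 1" by (auto simp: cands_def)
    have iy: "i \<le> idx s y" using le tr ne i_def by simp
    define z where "z = s ! i"
    have il: "i < length s" using ia idx_less[OF aS] by simp
    have zS: "z \<in> set s" using il z_def by simp
    have iz: "idx s z = i" using idx_nth[OF dist il] z_def by simp
    show "a \<in> set (lastn 2 (proj h a y))"
    proof (cases "i = idx s y")
      case True then have "z = y" using nth_idx[OF yS] z_def by simp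
      then show ?thesis using ic cnt z_def by simp
    next
      case False
      then have zy: "idx s z < idx s y" using iy iz by simp
      have zne: "z \<noteq> y" using zy by auto
      have Czy: "C init h z y" using inv zS yS zne zy by blast
      show ?thesis
      proof (rule ccontr)
        assume "a \<notin> set (lastn 2 (proj h a y))"
        then have c2: "2 \<le> count_list seg y" using cnt by simp
        have za: "z \<noteq> a" using ia iz by auto
        have pr0: "proj (take j h @ a # seg) z y = proj (take j h) z y @ proj seg z y"
          using za ya by (simp add: proj_def)
        have "proj h z y = proj (take j h @ a # seg) z y"
          using hdec by (rule arg_cong[where f="\<lambda>h. proj h z y"])
        then have pr: "proj h z y = proj (take j h) z y @ proj seg z y" using pr0 by simp
        have q1: "set (proj seg z y) \<subseteq> {z, y}" by (rule set_proj)
        have q2: "2 \<le> count_list (proj seg z y) y" using c2 by (simp add: proj_def count_filter)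
        have q3: "count_list (proj seg z y) z \<le> 1" using ic z_def by (simp add: proj_def count_filter)
        have y2: "2 \<le> count_list (lastn 3 (proj h z y)) y"
          using three_y[OF q1 zne q2 q3] pr by simp
        have "count_list (lastn 3 (proj h z y)) z + count_list (lastn 3 (proj h z y)) y \<le> 3"
          using count_sum[of "lastn 3 (proj h z y)" z y] M_props[of h z y] zne by simp
        then have "\<not> C init h z y" using y2 by (simp add: C_def Cm_def)
        then show False using Czy by simp
      qed
    qed
  next
    assume "a \<in> set (lastn 2 (proj h a y))"
    then have c: "count_list seg y \<le> 1" using cnt by simp
    have m: "idx s y \<in> set cands" using c yb nth_idx[OF yS] by (simp add: cands_def)
    then have "cands \<noteq> []" by auto
    moreover have "hd cands \<le> idx s y" using hd_filter_upt m unfolding cands_def by blast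
    ultimately show "ts_rule h s a \<le> idx s y" using tr by simp
  qed
qed




definition q0 :: st where "q0 = ([], False, False, True, True)"
definition pst :: "'a \<Rightarrow> 'a \<Rightarrow> 'a list \<Rightarrow> st" where
  "pst x y h = foldl (\<lambda>q z. if z = x then step q True else if z = y then step q False else q) q0 h"

lemma pst_snoc: "pst x y (h @ [a]) = (if a = x then step (pst x y h) True
   else if a = y then step (pst x y h) False else pst x y h)"
  by (simp add: pst_def)
lemma pst_Nil: "pst x y [] = q0" by (simp add: pst_def)
lemma q0_RR: "q0 \<in> set RR" by (simp add: q0_def RR_def)
lemma pst_RR: "pst x y h \<in> set RR"
  by (induction h rule: rev_induct) (auto simp: pst_snoc pst_Nil q0_RR fin_facts(1))

lemma l3_step: "lastn 3 (map f (lastn 3 L) @ [f d]) = map f (lastn 3 (L @ [d]))"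
  by (simp add: lastn_snoc3 lastn_lastn lastn_map)

lemma pst_comp: assumes "x \<noteq> y"
  shows "fst (pst x y h) = map (\<lambda>z. z = x) (lastn 3 (proj h x y)) \<and>
    fst (snd (pst x y h)) = odd (count_list h x) \<and> fst (snd (snd (pst x y h))) = odd (count_list h y)"
proof (induction h rule: rev_induct)
  case Nil then show ?case by (simp add: pst_Nil q0_def proj_def lastn_def)
next
  case (snoc a h)
  obtain l px py ob eb where e: "pst x y h = (l, px, py, ob, eb)" by (cases "pst x y h") auto
  have px: "(a = x \<longrightarrow> proj (h @ [a]) x y = proj h x y @ [x]) \<and> (a = y \<longrightarrow> proj (h @ [a]) x y = proj h x y @ [y])
     \<and> (a \<noteq> x \<and> a \<noteq> y \<longrightarrow> proj (h @ [a]) x y = proj h x y)"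
    by (simp add: proj_def)
  have t1: "lastn 3 (l @ [True]) = map (\<lambda>z. z = x) (lastn 3 (proj h x y @ [x]))" if "l = map (\<lambda>z. z = x) (lastn 3 (proj h x y))"
    using that l3_step[of "\<lambda>z. z = x" "proj h x y" x] by simp
  have t2: "lastn 3 (l @ [False]) = map (\<lambda>z. z = x) (lastn 3 (proj h x y @ [y]))" if "l = map (\<lambda>z. z = x) (lastn 3 (proj h x y))"
    using that l3_step[of "\<lambda>z. z = x" "proj h x y" y] assms by simp
  show ?case using snoc e px t1 t2 assms by (auto simp: pst_snoc)
qed

lemma obit_step: "obit (step q b) = (if (if b then fst (snd q) else fst (snd (snd q))) then obit q else b)"
  by (cases q) (simp add: obit_def)
lemma ebit_step: "ebit (step q b) = (if (if b then fst (snd q) else fst (snd (snd q))) then b else ebit q)"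
  by (cases q) (simp add: ebit_def)

lemma C_tsb: assumes "x \<noteq> y" "idx init x < idx init y"
  shows "C init h x y \<longleftrightarrow> tsb (fst (pst x y h))"
proof -
  define M where "M = lastn 3 (proj h x y)"
  have "length M \<le> 3" "set M \<subseteq> {x, y}" using M_props[of h x y] M_def by auto
  then have "Cm init M x y \<longleftrightarrow> tsb (map (\<lambda>z. z = x) M)"
    by (rule list3_induct) (use assms in \<open>auto simp: Cm_def tsb_def\<close>)
  then show ?thesis using pst_comp[OF assms(1), of h] by (simp add: C_def M_def)
qed




lemma double_delta: assumes "finite D" "a \<in> D"
  shows "(\<Sum>x\<in>D. \<Sum>y\<in>D. (if x = a then g y else 0) + (if y = a then f x else 0)) =
         (\<Sum>y\<in>D. g y) + (\<Sum>x\<in>D. (f x :: nat))"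
proof -
  have i1: "(\<Sum>y\<in>D. if x = a then g y else 0) = (if x = a then (\<Sum>y\<in>D. g y) else 0)" for x
    by simp
  have i2: "(\<Sum>y\<in>D. if y = a then f x else 0) = f x" for x
    using assms by (simp add: sum.delta)
  have "(\<Sum>x\<in>D. \<Sum>y\<in>D. (if x = a then g y else 0) + (if y = a then f x else 0)) =
        (\<Sum>x\<in>D. (if x = a then (\<Sum>y\<in>D. g y) else 0) + f x)"
    by (simp only: sum.distrib i1 i2)
  also have "\<dots> = (\<Sum>y\<in>D. g y) + (\<Sum>x\<in>D. f x)"
    using assms by (simp add: sum.distrib)
  finally show ?thesis .
qed

lemma cost_split: assumes "distinct s" "set s = set init" "a \<in> set init"
  shows "idx s a = (\<Sum>x\<in>set init. \<Sum>y\<in>set init.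
     if idx init x < idx init y \<and> (a = x \<or> a = y) then cst (idx s x < idx s y) (a = x) else 0)"
proof -
  let ?D = "set init"
  have "(\<Sum>x\<in>?D. \<Sum>y\<in>?D. if idx init x < idx init y \<and> (a = x \<or> a = y) then cst (idx s x < idx s y) (a = x) else 0)
      = (\<Sum>x\<in>?D. \<Sum>y\<in>?D. (if x = a then (if idx init a < idx init y then cst (idx s a < idx s y) True else 0) else 0)
            + (if y = a then (if idx init x < idx init a then cst (idx s x < idx s a) False else 0) else 0))"
    by (rule sum.cong[OF refl], rule sum.cong[OF refl]) auto
  also have "\<dots> = (\<Sum>y\<in>?D. if idx init a < idx init y then cst (idx s a < idx s y) True else 0)
      + (\<Sum>x\<in>?D. if idx init x < idx init a then cst (idx s x < idx s a) False else 0)"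
    by (rule double_delta) (use assms in auto)
  also have "\<dots> = (\<Sum>y\<in>?D. if idx s y < idx s a then 1 else 0)"
    unfolding sum.distrib[symmetric]
  proof (rule sum.cong[OF refl])
    fix y assume yD: "y \<in> ?D"
    show "(if idx init a < idx init y then cst (idx s a < idx s y) True else 0) +
          (if idx init y < idx init a then cst (idx s y < idx s a) False else 0) =
          (if idx s y < idx s a then 1 else 0)"
    proof (cases "y = a")
      case True then show ?thesis by simp
    next
      case False
      have "idx init y \<noteq> idx init a" using False yD assms(3) idx_inj by metis
      moreover have "idx s y \<noteq> idx s a" using False yD assms idx_inj by metis
      ultimately show ?thesis by (auto simp: cst_def)
    qed
  qed
  also have "\<dots> = card {y \<in> ?D. idx s y < idx s a}"
    by (simp add: sum.If_cases Int_def conj_commute)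
  also have "\<dots> = idx s a" using card_before[OF assms(1)] assms(2,3) by simp
  finally show ?thesis by simp
qed

definition Phi :: "'a list \<Rightarrow> 'a list \<Rightarrow> 'a list \<Rightarrow> nat" where
  "Phi init h s = (\<Sum>x\<in>set init. \<Sum>y\<in>set init.
     if idx init x < idx init y then Psi (pst x y h) (idx s x < idx s y) else 0)"

lemma Psi_any: "q \<in> set RR \<Longrightarrow> Psi q c' \<le> Psi q c + 5"
  using fin_facts(2)[of q c] by (cases "c' = c") auto

lemma Phi_swap: assumes "distinct s" "set s = set init"
  shows "Phi init h (swap_adj i s) \<le> Phi init h s + 5"
proof (cases "Suc i < length s")
  case False then show ?thesis by (simp add: swap_adj_def)
next
  case True
  define u where "u = s ! i"
  define v where "v = s ! Suc i"
  have iu: "idx s u = i" using idx_nth[OF assms(1)] True u_def by simp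
  have iv: "idx s v = Suc i" using idx_nth[OF assms(1)] True v_def by simp
  define m1 where "m1 = (if idx init u < idx init v then u else v)"
  define m2 where "m2 = (if idx init u < idx init v then v else u)"
  have trm: "(if idx init x < idx init y then Psi (pst x y h) (idx (swap_adj i s) x < idx (swap_adj i s) y) else 0)
      \<le> (if idx init x < idx init y then Psi (pst x y h) (idx s x < idx s y) else 0)
         + (if x = m1 then (if y = m2 then 5 else 0) else 0)"
    if xD: "x \<in> set init" and yD: "y \<in> set init" for x y
  proof (cases "idx init x < idx init y")
    case False then show ?thesis by simp
  next
    case lt: True
    then have xy: "x \<noteq> y" by auto
    show ?thesis
    proof (cases "(x = u \<and> y = v) \<or> (x = v \<and> y = u)")
      case True
      then have "x = m1 \<and> y = m2" using lt unfolding m1_def m2_def by auto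
      then show ?thesis using lt Psi_any[OF pst_RR] by simp
    next
      case False
      have xs: "x \<in> set s" and ys: "y \<in> set s" using xD yD assms by auto
      have ix: "idx (swap_adj i s) x = (if x = u then Suc i else if x = v then i else idx s x)"
        using idx_swap[OF assms(1) True xs] u_def v_def by simp
      have iy: "idx (swap_adj i s) y = (if y = u then Suc i else if y = v then i else idx s y)"
        using idx_swap[OF assms(1) True ys] u_def v_def by simp
      have nx: "x \<noteq> u \<Longrightarrow> idx s x \<noteq> i" "x \<noteq> v \<Longrightarrow> idx s x \<noteq> Suc i"
        using iu iv xs idx_inj True u_def v_def by (metis Suc_lessD nth_mem)+
      have ny: "y \<noteq> u \<Longrightarrow> idx s y \<noteq> i" "y \<noteq> v \<Longrightarrow> idx s y \<noteq> Suc i"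
        using iu iv ys idx_inj True u_def v_def by (metis Suc_lessD nth_mem)+
      have "idx (swap_adj i s) x < idx (swap_adj i s) y \<longleftrightarrow> idx s x < idx s y"
        unfolding ix iy using False xy nx ny iu iv by auto
      then show ?thesis by simp
    qed
  qed
  have "Phi init h (swap_adj i s) \<le> (\<Sum>x\<in>set init. \<Sum>y\<in>set init.
      (if idx init x < idx init y then Psi (pst x y h) (idx s x < idx s y) else 0)
       + (if x = m1 then (if y = m2 then 5 else 0) else 0))"
    unfolding Phi_def by (intro sum_mono trm)
  also have "\<dots> = Phi init h s + (\<Sum>x\<in>set init. \<Sum>y\<in>set init. if x = m1 then (if y = m2 then 5 else 0) else 0)"
    by (simp add: Phi_def sum.distrib)
  also have "(\<Sum>x\<in>set init. \<Sum>y\<in>set init. if x = m1 then (if y = m2 then 5 else 0) else (0::nat)) \<le> 5"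
  proof -
    have e1: "(\<Sum>y\<in>set init. if x = m1 then (if y = m2 then 5 else 0) else (0::nat))
        = (if x = m1 then (if m2 \<in> set init then 5 else 0) else 0)" for x
      by (cases "x = m1") (simp_all add: sum.delta)
    show ?thesis unfolding e1 by (simp add: sum.delta)
  qed
  finally show ?thesis by simp
qed

lemma swaps_perm: "distinct s \<Longrightarrow> distinct (foldl (\<lambda>t i. swap_adj i t) s sw) \<and>
    set (foldl (\<lambda>t i. swap_adj i t) s sw) = set s"
proof (induction sw arbitrary: s)
  case (Cons i sw)
  then show ?case using Cons.IH[of "swap_adj i s"] swap_perm[OF Cons.prems, of i] by simp
qed simp

lemma Phi_swaps: assumes "distinct s" "set s = set init"
  shows "Phi init h (foldl (\<lambda>t i. swap_adj i t) s sw) \<le> Phi init h s + 5 * length sw"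
  using assms
proof (induction sw arbitrary: s)
  case Nil then show ?case by simp
next
  case (Cons i sw)
  have p: "distinct (swap_adj i s)" "set (swap_adj i s) = set init" using swap_perm Cons.prems by auto
  have "Phi init h (foldl (\<lambda>t i. swap_adj i t) s (i # sw)) \<le> Phi init h (swap_adj i s) + 5 * length sw"
    using Cons.IH[OF p] by simp
  also have "\<dots> \<le> Phi init h s + 5 + 5 * length sw" using Phi_swap[OF Cons.prems] by simp
  finally show ?case by simp
qed




definition INV :: "'a list \<Rightarrow> 'a list \<Rightarrow> 'a list \<Rightarrow> 'a list \<Rightarrow> 'a list \<Rightarrow> bool" where
 "INV init h sT sO sE \<longleftrightarrow> distinct sT \<and> set sT = set init \<and> distinct sO \<and> set sO = set init \<and>
   distinct sE \<and> set sE = set init \<and>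
   (\<forall>u\<in>set init. \<forall>v\<in>set init. u \<noteq> v \<longrightarrow> (idx sT u < idx sT v \<longleftrightarrow> C init h u v)) \<and>
   (\<forall>x\<in>set init. \<forall>y\<in>set init. idx init x < idx init y \<longrightarrow>
      (idx sO x < idx sO y \<longleftrightarrow> obit (pst x y h)) \<and> (idx sE x < idx sE y \<longleftrightarrow> ebit (pst x y h)))"

lemma mtfo_le: "mtfo_rule h s a \<le> idx s a" by (simp add: mtfo_rule_def)
lemma mtfe_le: "mtfe_rule h s a \<le> idx s a" by (simp add: mtfe_rule_def)

lemma TS_step: assumes di: "distinct init" and ds: "distinct s" "set s = set init" and aD: "a \<in> set init"
  and inv: "\<forall>u\<in>set init. \<forall>v\<in>set init. u \<noteq> v \<longrightarrow> (idx s u < idx s v \<longleftrightarrow> C init h u v)"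
  shows "\<forall>u\<in>set init. \<forall>v\<in>set init. u \<noteq> v \<longrightarrow>
    (idx (mv_to (ts_rule h s a) a s) u < idx (mv_to (ts_rule h s a) a s) v \<longleftrightarrow> C init (h @ [a]) u v)"
proof (intro ballI impI)
  fix u v assume uD: "u \<in> set init" and vD: "v \<in> set init" and uv: "u \<noteq> v"
  let ?k = "ts_rule h s a"
  have aS: "a \<in> set s" using aD ds by simp
  have us: "u \<in> set s" "v \<in> set s" using uD vD ds by auto
  have mp: "idx (mv_to ?k a s) u < idx (mv_to ?k a s) v \<longleftrightarrow> (if a = u then idx s u < idx s v \<or> ?k \<le> idx s v
     else if a = v then idx s u < idx s v \<and> \<not> ?k \<le> idx s u else idx s u < idx s v)"
    by (rule mv_pair[OF ds(1) aS ts_le us uv])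
  have inv': "\<forall>u\<in>set s. \<forall>v\<in>set s. u \<noteq> v \<longrightarrow> (idx s u < idx s v \<longleftrightarrow> C init h u v)" using inv ds by simp
  have ne: "idx s u \<noteq> idx s v" using us uv idx_inj by metis
  have nei: "idx init u \<noteq> idx init v" using uD vD uv idx_inj by metis
  have old: "idx s u < idx s v \<longleftrightarrow> C init h u v" using inv uD vD uv by blast
  show "idx (mv_to ?k a s) u < idx (mv_to ?k a s) v \<longleftrightarrow> C init (h @ [a]) u v"
  proof (cases "a = u")
    case True
    have c1: "C init (h @ [a]) u v \<longleftrightarrow> C init h u v \<or> u \<in> set (lastn 2 (proj h u v))"
      using C_snoc[of u v init h] uv True by simp
    have c2: "\<not> idx s u < idx s v \<Longrightarrow> (?k \<le> idx s v \<longleftrightarrow> u \<in> set (lastn 2 (proj h u v)))"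
    proof -
      assume "\<not> idx s u < idx s v"
      then have "idx s v < idx s a" using ne True by simp
      then show ?thesis using ts_key[OF ds(1) aS us(2) _ _ inv'] True uv by auto
    qed
    show ?thesis using mp True old c1 c2 by auto
  next
    case False
    show ?thesis
    proof (cases "a = v")
      case True
      have c1: "C init (h @ [a]) u v \<longleftrightarrow> \<not> C init (h @ [a]) v u" using C_sym[of u v init "h @ [a]"] uv nei by auto
      have c2: "C init (h @ [a]) v u \<longleftrightarrow> C init h v u \<or> v \<in> set (lastn 2 (proj h v u))"
        using C_snoc[of v u init h] uv True by simp
      have c3: "C init h v u \<longleftrightarrow> \<not> C init h u v" using C_sym[of u v init h] uv nei by simp
      have c4: "idx s u < idx s v \<Longrightarrow> (?k \<le> idx s u \<longleftrightarrow> v \<in> set (lastn 2 (proj h v u)))"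
        using ts_key[OF ds(1) aS us(1) _ _ inv'] True uv by auto
      show ?thesis using mp True False old c1 c2 c3 c4 by auto
    next
      case False2: False
      then show ?thesis using mp \<open>a \<noteq> u\<close> C_other[of a u v init h] old by auto
    qed
  qed
qed

lemma O_step: assumes ds: "distinct s" "set s = set init" and aD: "a \<in> set init"
  and inv: "\<forall>x\<in>set init. \<forall>y\<in>set init. idx init x < idx init y \<longrightarrow> (idx s x < idx s y \<longleftrightarrow> obit (pst x y h))"
  shows "\<forall>x\<in>set init. \<forall>y\<in>set init. idx init x < idx init y \<longrightarrow>
    (idx (mv_to (mtfo_rule h s a) a s) x < idx (mv_to (mtfo_rule h s a) a s) y \<longleftrightarrow> obit (pst x y (h @ [a])))"
proof (intro ballI impI)
  fix x y assume xD: "x \<in> set init" and yD: "y \<in> set init" and lt: "idx init x < idx init y"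
  have xy: "x \<noteq> y" using lt by auto
  let ?k = "mtfo_rule h s a"
  have aS: "a \<in> set s" using aD ds by simp
  have xs: "x \<in> set s" "y \<in> set s" using xD yD ds by auto
  have mp: "idx (mv_to ?k a s) x < idx (mv_to ?k a s) y \<longleftrightarrow> (if a = x then idx s x < idx s y \<or> ?k \<le> idx s y
     else if a = y then idx s x < idx s y \<and> \<not> ?k \<le> idx s x else idx s x < idx s y)"
    by (rule mv_pair[OF ds(1) aS mtfo_le xs xy])
  have ne: "idx s x \<noteq> idx s y" using xs xy idx_inj by metis
  have old: "idx s x < idx s y \<longleftrightarrow> obit (pst x y h)" using inv xD yD lt by blast
  have pc: "fst (snd (pst x y h)) = odd (count_list h x)" "fst (snd (snd (pst x y h))) = odd (count_list h y)"
    using pst_comp[OF xy, of h] by auto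
  show "idx (mv_to ?k a s) x < idx (mv_to ?k a s) y \<longleftrightarrow> obit (pst x y (h @ [a]))"
    using mp old pc ne xy by (auto simp: pst_snoc obit_step mtfo_rule_def)
qed

lemma E_step: assumes ds: "distinct s" "set s = set init" and aD: "a \<in> set init"
  and inv: "\<forall>x\<in>set init. \<forall>y\<in>set init. idx init x < idx init y \<longrightarrow> (idx s x < idx s y \<longleftrightarrow> ebit (pst x y h))"
  shows "\<forall>x\<in>set init. \<forall>y\<in>set init. idx init x < idx init y \<longrightarrow>
    (idx (mv_to (mtfe_rule h s a) a s) x < idx (mv_to (mtfe_rule h s a) a s) y \<longleftrightarrow> ebit (pst x y (h @ [a])))"
proof (intro ballI impI)
  fix x y assume xD: "x \<in> set init" and yD: "y \<in> set init" and lt: "idx init x < idx init y"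
  have xy: "x \<noteq> y" using lt by auto
  let ?k = "mtfe_rule h s a"
  have aS: "a \<in> set s" using aD ds by simp
  have xs: "x \<in> set s" "y \<in> set s" using xD yD ds by auto
  have mp: "idx (mv_to ?k a s) x < idx (mv_to ?k a s) y \<longleftrightarrow> (if a = x then idx s x < idx s y \<or> ?k \<le> idx s y
     else if a = y then idx s x < idx s y \<and> \<not> ?k \<le> idx s x else idx s x < idx s y)"
    by (rule mv_pair[OF ds(1) aS mtfe_le xs xy])
  have ne: "idx s x \<noteq> idx s y" using xs xy idx_inj by metis
  have old: "idx s x < idx s y \<longleftrightarrow> ebit (pst x y h)" using inv xD yD lt by blast
  have pc: "fst (snd (pst x y h)) = odd (count_list h x)" "fst (snd (snd (pst x y h))) = odd (count_list h y)"
    using pst_comp[OF xy, of h] by auto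
  show "idx (mv_to ?k a s) x < idx (mv_to ?k a s) y \<longleftrightarrow> ebit (pst x y (h @ [a]))"
    using mp old pc ne xy by (auto simp: pst_snoc ebit_step mtfe_rule_def)
qed

lemma opt_move: assumes "distinct s" "a \<in> set s" "x \<in> set s" "y \<in> set s" "x \<noteq> y"
  shows "(a \<noteq> x \<and> a \<noteq> y \<longrightarrow> (idx (mv_to k a s) x < idx (mv_to k a s) y \<longleftrightarrow> idx s x < idx s y)) \<and>
         ((idx (mv_to k a s) x < idx (mv_to k a s) y) = (idx s x < idx s y) \<or>
          (idx (mv_to k a s) x < idx (mv_to k a s) y) = (a = x))"
proof (cases "k \<le> idx s a")
  case True then show ?thesis using mv_pair[OF assms(1,2) True assms(3-5)] assms(5) by auto
next
  case False then have "mv_to k a s = s" by (simp add: mv_to_def)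
  then show ?thesis by simp
qed

lemma pair_step:
  assumes "x \<noteq> y" "a = x \<or> a = y"
   and "tT \<longleftrightarrow> tsb (fst (pst x y h))" "tO \<longleftrightarrow> obit (pst x y h)" "tE \<longleftrightarrow> ebit (pst x y h)"
   and "o' = c \<or> o' = (a = x)"
  shows "cst tT (a = x) + cst tO (a = x) + cst tE (a = x) + Psi (pst x y (h @ [a])) o'
     \<le> Psi (pst x y h) c + 5 * cst c (a = x)"
proof -
  have "pst x y (h @ [a]) = step (pst x y h) (a = x)" using assms(1,2) by (auto simp: pst_snoc)
  then show ?thesis using fin_facts(3)[OF pst_RR, of o' c "a = x" x y h] assms(3-6) by simp
qed




lemma step_sum:
  assumes di: "distinct init" and inv: "INV init h sT sO sE" and aD: "a \<in> set init"
    and s1p: "distinct s1" "set s1 = set init"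
  shows "idx sT a + idx sO a + idx sE a + Phi init (h @ [a]) (mv_to k a s1) \<le> Phi init h s1 + 5 * idx s1 a"
proof -
  let ?D = "set init"
  define sP' where "sP' = mv_to k a s1"
  have I: "distinct sT" "set sT = ?D" "distinct sO" "set sO = ?D" "distinct sE" "set sE = ?D"
    "\<forall>u\<in>?D. \<forall>v\<in>?D. u \<noteq> v \<longrightarrow> (idx sT u < idx sT v \<longleftrightarrow> C init h u v)"
    "\<forall>x\<in>?D. \<forall>y\<in>?D. idx init x < idx init y \<longrightarrow>
      (idx sO x < idx sO y \<longleftrightarrow> obit (pst x y h)) \<and> (idx sE x < idx sE y \<longleftrightarrow> ebit (pst x y h))"
    using inv unfolding INV_def by auto
  define A where "A = (\<lambda>s x y. if idx init x < idx init y \<and> (a = x \<or> a = y) then cst (idx s x < idx s y) (a = x) else 0)"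
  define P' where "P' = (\<lambda>x y. if idx init x < idx init y then Psi (pst x y (h @ [a])) (idx sP' x < idx sP' y) else 0)"
  define P where "P = (\<lambda>x y. if idx init x < idx init y then Psi (pst x y h) (idx s1 x < idx s1 y) else 0)"
  have cT: "idx sT a = (\<Sum>x\<in>?D. \<Sum>y\<in>?D. A sT x y)" unfolding A_def by (rule cost_split[OF I(1,2) aD])
  have cO: "idx sO a = (\<Sum>x\<in>?D. \<Sum>y\<in>?D. A sO x y)" unfolding A_def by (rule cost_split[OF I(3,4) aD])
  have cE: "idx sE a = (\<Sum>x\<in>?D. \<Sum>y\<in>?D. A sE x y)" unfolding A_def by (rule cost_split[OF I(5,6) aD])
  have c1: "idx s1 a = (\<Sum>x\<in>?D. \<Sum>y\<in>?D. A s1 x y)" unfolding A_def by (rule cost_split[OF s1p aD])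
  have ph': "Phi init (h @ [a]) sP' = (\<Sum>x\<in>?D. \<Sum>y\<in>?D. P' x y)" by (simp add: Phi_def P'_def)
  have ph: "Phi init h s1 = (\<Sum>x\<in>?D. \<Sum>y\<in>?D. P x y)" by (simp add: Phi_def P_def)
  have trm: "A sT x y + A sO x y + A sE x y + P' x y \<le> P x y + 5 * A s1 x y"
    if xD: "x \<in> ?D" and yD: "y \<in> ?D" for x y
  proof (cases "idx init x < idx init y")
    case False then show ?thesis by (simp add: A_def P_def P'_def)
  next
    case lt: True
    then have xy: "x \<noteq> y" by auto
    have xs1: "x \<in> set s1" "y \<in> set s1" "a \<in> set s1" using xD yD aD s1p by auto
    have om: "(a \<noteq> x \<and> a \<noteq> y \<longrightarrow> (idx sP' x < idx sP' y \<longleftrightarrow> idx s1 x < idx s1 y)) \<and>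
         ((idx sP' x < idx sP' y) = (idx s1 x < idx s1 y) \<or> (idx sP' x < idx sP' y) = (a = x))"
      unfolding sP'_def by (rule opt_move[OF s1p(1) xs1(3) xs1(1,2) xy])
    show ?thesis
    proof (cases "a = x \<or> a = y")
      case True
      have tT: "idx sT x < idx sT y \<longleftrightarrow> tsb (fst (pst x y h))"
        using I(7) xD yD xy C_tsb[OF xy lt] by blast
      have tO: "idx sO x < idx sO y \<longleftrightarrow> obit (pst x y h)" using I(8) xD yD lt by blast
      have tE: "idx sE x < idx sE y \<longleftrightarrow> ebit (pst x y h)" using I(8) xD yD lt by blast
      have "cst (idx sT x < idx sT y) (a = x) + cst (idx sO x < idx sO y) (a = x) + cst (idx sE x < idx sE y) (a = x)
          + Psi (pst x y (h @ [a])) (idx sP' x < idx sP' y)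
          \<le> Psi (pst x y h) (idx s1 x < idx s1 y) + 5 * cst (idx s1 x < idx s1 y) (a = x)"
        by (rule pair_step[OF xy True tT tO tE]) (use om in blast)
      then show ?thesis using lt True by (simp add: A_def P_def P'_def)
    next
      case False
      then have "pst x y (h @ [a]) = pst x y h" by (simp add: pst_snoc)
      then show ?thesis using lt False om by (simp add: A_def P_def P'_def)
    qed
  qed
  have "(\<Sum>x\<in>?D. \<Sum>y\<in>?D. A sT x y + A sO x y + A sE x y + P' x y) \<le> (\<Sum>x\<in>?D. \<Sum>y\<in>?D. P x y + 5 * A s1 x y)"
    by (intro sum_mono trm)
  moreover have "(\<Sum>x\<in>?D. \<Sum>y\<in>?D. A sT x y + A sO x y + A sE x y + P' x y) =
      (\<Sum>x\<in>?D. \<Sum>y\<in>?D. A sT x y) + (\<Sum>x\<in>?D. \<Sum>y\<in>?D. A sO x y) + (\<Sum>x\<in>?D. \<Sum>y\<in>?D. A sE x y) + (\<Sum>x\<in>?D. \<Sum>y\<in>?D. P' x y)"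
    by (simp add: sum.distrib)
  moreover have "(\<Sum>x\<in>?D. \<Sum>y\<in>?D. P x y + 5 * A s1 x y) = (\<Sum>x\<in>?D. \<Sum>y\<in>?D. P x y) + 5 * (\<Sum>x\<in>?D. \<Sum>y\<in>?D. A s1 x y)"
    by (simp add: sum.distrib sum_distrib_left)
  ultimately show ?thesis unfolding sP'_def[symmetric] using cT cO cE c1 ph ph' by simp
qed

lemma arith_fin: "(RT::nat) + RO + RE \<le> 5 * R' + P' \<Longrightarrow> Q1 \<le> Q0 + 5 * w \<Longrightarrow>
  t + u + v + P' \<le> Q1 + 5 * i \<Longrightarrow>
  Suc t + RT + (Suc u + RO) + (Suc v + RE) \<le> 5 * (w + Suc i + R') + Q0"
  by (simp add: algebra_simps)

lemma main:
  assumes di: "distinct init"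
  shows "INV init h sT sO sE \<Longrightarrow> distinct sP \<Longrightarrow> set sP = set init \<Longrightarrow> set \<sigma> \<subseteq> set init \<Longrightarrow>
    length as = length \<sigma> \<Longrightarrow>
    run_online ts_rule h sT \<sigma> + run_online mtfo_rule h sO \<sigma> + run_online mtfe_rule h sE \<sigma>
         \<le> 5 * run_offline sP \<sigma> as + Phi init h sP"
proof (induction \<sigma> arbitrary: h sT sO sE sP as)
  case Nil then show ?case by simp
next
  case (Cons a \<sigma>)
  obtain sw k as' where asd: "as = (sw, k) # as'" using Cons.prems(5) by (cases as) auto
  have len': "length as' = length \<sigma>" using Cons.prems(5) asd by simp
  have aD: "a \<in> set init" using Cons.prems(4) by simp
  have sig': "set \<sigma> \<subseteq> set init" using Cons.prems(4) by simp
  define s1 where "s1 = foldl (\<lambda>t i. swap_adj i t) sP sw"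
  define sP' where "sP' = mv_to k a s1"
  define sT' where "sT' = mv_to (ts_rule h sT a) a sT"
  define sO' where "sO' = mv_to (mtfo_rule h sO a) a sO"
  define sE' where "sE' = mv_to (mtfe_rule h sE a) a sE"
  have I: "distinct sT" "set sT = set init" "distinct sO" "set sO = set init" "distinct sE" "set sE = set init"
    "\<forall>u\<in>set init. \<forall>v\<in>set init. u \<noteq> v \<longrightarrow> (idx sT u < idx sT v \<longleftrightarrow> C init h u v)"
    "\<forall>x\<in>set init. \<forall>y\<in>set init. idx init x < idx init y \<longrightarrow> (idx sO x < idx sO y \<longleftrightarrow> obit (pst x y h))"
    "\<forall>x\<in>set init. \<forall>y\<in>set init. idx init x < idx init y \<longrightarrow> (idx sE x < idx sE y \<longleftrightarrow> ebit (pst x y h))"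
    using Cons.prems(1) unfolding INV_def by auto
  have s1p: "distinct s1" "set s1 = set init" using swaps_perm[OF Cons.prems(2)] Cons.prems(3) s1_def by auto
  have sP'p: "distinct sP'" "set sP' = set init" using mv_to_perm[OF s1p(1)] s1p aD sP'_def by auto
  have pT: "distinct sT' \<and> set sT' = set init" using mv_to_perm[OF I(1)] I(2) aD sT'_def by auto
  have pO: "distinct sO' \<and> set sO' = set init" using mv_to_perm[OF I(3)] I(4) aD sO'_def by auto
  have pE: "distinct sE' \<and> set sE' = set init" using mv_to_perm[OF I(5)] I(6) aD sE'_def by auto
  have inv': "INV init (h @ [a]) sT' sO' sE'"
    unfolding INV_def sT'_def sO'_def sE'_def
    using pT pO pE TS_step[OF di I(1,2) aD I(7)] O_step[OF I(3,4) aD I(8)] E_step[OF I(5,6) aD I(9)]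
    unfolding sT'_def sO'_def sE'_def by blast
  have IH: "run_online ts_rule (h @ [a]) sT' \<sigma> + run_online mtfo_rule (h @ [a]) sO' \<sigma> + run_online mtfe_rule (h @ [a]) sE' \<sigma>
      \<le> 5 * run_offline sP' \<sigma> as' + Phi init (h @ [a]) sP'"
    by (rule Cons.IH[OF inv' sP'p sig' len'])
  have Ph: "Phi init h s1 \<le> Phi init h sP + 5 * length sw" using Phi_swaps[OF Cons.prems(2,3)] s1_def by simp
  have st: "idx sT a + idx sO a + idx sE a + Phi init (h @ [a]) sP' \<le> Phi init h s1 + 5 * idx s1 a"
    unfolding sP'_def by (rule step_sum[OF di Cons.prems(1) aD s1p])
  have ro: "run_offline sP (a # \<sigma>) as = length sw + Suc (idx s1 a) + run_offline sP' \<sigma> as'"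
    by (simp add: asd s1_def sP'_def Let_def)
  have rT: "run_online ts_rule h sT (a # \<sigma>) = Suc (idx sT a) + run_online ts_rule (h @ [a]) sT' \<sigma>"
    by (simp add: sT'_def)
  have rO: "run_online mtfo_rule h sO (a # \<sigma>) = Suc (idx sO a) + run_online mtfo_rule (h @ [a]) sO' \<sigma>"
    by (simp add: sO'_def)
  have rE: "run_online mtfe_rule h sE (a # \<sigma>) = Suc (idx sE a) + run_online mtfe_rule (h @ [a]) sE' \<sigma>"
    by (simp add: sE'_def)
  show ?case unfolding rT rO rE ro by (rule arith_fin[OF IH Ph st])
qed



theorem theorem3:
  fixes init \<sigma> :: "'a list"
  assumes "distinct init" and "set \<sigma> \<subseteq> set init"
  shows "real (min (TS init \<sigma>) (min (MTFO init \<sigma>) (MTFE init \<sigma>))) \<le> 5 / 3 * real (OPT init \<sigma>)"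
proof -
  define S where "S = {run_offline init \<sigma> as | as. length as = length \<sigma>}"
  have "run_offline init \<sigma> (replicate (length \<sigma>) ([], 0)) \<in> S" unfolding S_def
    by (rule CollectI, rule exI[where x="replicate (length \<sigma>) ([], 0)"]) simp
  then have "S \<noteq> {}" by auto
  then have "Inf S \<in> S" by (rule Inf_nat_def1)
  moreover have "OPT init \<sigma> = Inf S" unfolding OPT_def S_def by (rule refl)
  ultimately have "OPT init \<sigma> \<in> S" by simp
  then obtain as where len: "length as = length \<sigma>" and opt: "OPT init \<sigma> = run_offline init \<sigma> as"
    unfolding S_def by (auto simp del: run_offline.simps)
  have c0: "C init [] u v \<longleftrightarrow> idx init u < idx init v" for u v
    by (simp add: C_def Cm_def proj_def lastn_def)
  have b0: "obit (pst x y []) \<and> ebit (pst x y []) " for x y :: 'a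
    by (simp add: pst_Nil q0_def obit_def ebit_def)
  have inv0: "INV init [] init init init"
    unfolding INV_def using assms(1) by (simp add: c0 b0)
  have psi0: "Psi q0 True = 0" unfolding q0_def by code_simp
  have phi0: "Phi init [] init = 0" unfolding Phi_def by (simp add: pst_Nil psi0)
  have "TS init \<sigma> + MTFO init \<sigma> + MTFE init \<sigma> \<le> 5 * OPT init \<sigma>"
    using main[OF assms(1) inv0 assms(1) refl assms(2) len] phi0 opt
    by (simp add: TS_def MTFO_def MTFE_def)
  then have "3 * min (TS init \<sigma>) (min (MTFO init \<sigma>) (MTFE init \<sigma>)) \<le> 5 * OPT init \<sigma>" by linarith
  then have "real (3 * min (TS init \<sigma>) (min (MTFO init \<sigma>) (MTFE init \<sigma>))) \<le> real (5 * OPT init \<sigma>)"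
    by (simp only: of_nat_le_iff)
  then show ?thesis by simp
qed


end
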